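(* Let $T$ be a noncrossing tree with vertex set $[n]$, with signature $s(T)=(s_1,\dots,s_n)$, and let $\overline{ik}\in T$ with $i<k$. Then $s_j\ge s_i$ for all $i<j<k$. Moreover, if $i<j<k$ and the path from $j$ to $k$ in $T$ does not contain $i$, then $s_j\ge s_i+1$.
   Context: A graph on $[n]$ is noncrossing if it has no two edges $\overline{ac},\overline{bd}$ with $a<b<c<d$. The signature of a noncrossing tree $T$ on $[n]$ is the sequence $s(T)=(s_1,\dots,s_n)$ defined by $s_1=1$ and, for $i>1$: $s_i=s_j$ where $j<i$ is the minimum vertex with $\overline{ji}\in T$, if such $j$ exists; otherwise $s_i=s_{i-1}+1$. *)

theory Defs
  imports Main
begin

definition graph_on :: "nat \<Rightarrow> nat set set \<Rightarrow> bool" where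
  "graph_on n E \<longleftrightarrow> (\<forall>e\<in>E. \<exists>a b. e = {a, b} \<and> a \<noteq> b \<and> a \<in> {1..n} \<and> b \<in> {1..n})"

definition is_walk :: "nat set set \<Rightarrow> nat list \<Rightarrow> bool" where
  "is_walk E p \<longleftrightarrow> p \<noteq> [] \<and> (\<forall>t < length p - 1. {p ! t, p ! Suc t} \<in> E)"

definition is_path :: "nat set set \<Rightarrow> nat list \<Rightarrow> nat \<Rightarrow> nat \<Rightarrow> bool" where
  "is_path E p u v \<longleftrightarrow> is_walk E p \<and> distinct p \<and> hd p = u \<and> last p = v"

definition has_cycle :: "nat set set \<Rightarrow> bool" where
  "has_cycle E \<longleftrightarrow> (\<exists>p. is_walk E p \<and> distinct p \<and> length p \<ge> 3 \<and> {last p, hd p} \<in> E)"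

definition connected_on :: "nat \<Rightarrow> nat set set \<Rightarrow> bool" where
  "connected_on n E \<longleftrightarrow> (\<forall>u\<in>{1..n}. \<forall>v\<in>{1..n}. \<exists>p. is_path E p u v)"

definition is_tree :: "nat \<Rightarrow> nat set set \<Rightarrow> bool" where
  "is_tree n E \<longleftrightarrow> graph_on n E \<and> connected_on n E \<and> \<not> has_cycle E"

definition noncrossing :: "nat set set \<Rightarrow> bool" where
  "noncrossing E \<longleftrightarrow> \<not> (\<exists>a b c d. a < b \<and> b < c \<and> c < d \<and> {a, c} \<in> E \<and> {b, d} \<in> E)"

function signature :: "nat set set \<Rightarrow> nat \<Rightarrow> nat" where
  "signature E i =
     (if i \<le> 1 then 1
      else if (\<exists>j<i. {j, i} \<in> E)
           then signature E (LEAST j. {j, i} \<in> E)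
           else signature E (i - 1) + 1)"
  by pat_completeness auto
termination
proof (relation "measure snd")
  fix E :: "nat set set" and i :: nat
  assume "\<not> i \<le> 1" "\<exists>j<i. {j, i} \<in> E"
  then obtain j where "j < i" "{j, i} \<in> E" by blast
  then have "(LEAST j. {j, i} \<in> E) \<le> j" by (rule_tac Least_le) 
  with \<open>j < i\<close> show "((E, LEAST j. {j, i} \<in> E), E, i) \<in> measure snd" by simp
qed auto

end

theory Submission
  imports Defs
begin

declare signature.simps[simp del]

lemma walk_append:
  assumes "is_walk E a" "is_walk E b" "{last a, hd b} \<in> E"
  shows "is_walk E (a @ b)"
  unfolding is_walk_def
proof (intro conjI allI impI)
  show "a @ b \<noteq> []" using assms(1) by (simp add: is_walk_def)
next
  fix t assume t: "t < length (a @ b) - 1"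
  have a: "a \<noteq> []" "\<forall>t < length a - 1. {a ! t, a ! Suc t} \<in> E" using assms(1) by (auto simp: is_walk_def)
  have b: "b \<noteq> []" "\<forall>t < length b - 1. {b ! t, b ! Suc t} \<in> E" using assms(2) by (auto simp: is_walk_def)
  consider "Suc t < length a" | "Suc t = length a" | "t \<ge> length a" by linarith
  then show "{(a @ b) ! t, (a @ b) ! Suc t} \<in> E"
  proof cases
    case 1 then show ?thesis using a by (simp add: nth_append)
  next
    case 2
    then have "t = length a - 1" by simp
    then have "a ! t = last a" using a by (simp add: last_conv_nth)
    moreover have "b ! 0 = hd b" using b by (simp add: hd_conv_nth)
    ultimately show ?thesis using 2 assms(3) by (simp add: nth_append)
  next
    case 3
    then have "t - length a < length b - 1" using t by simp
    then have "{b ! (t - length a), b ! Suc (t - length a)} \<in> E" using b by blast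
    moreover have "Suc t - length a = Suc (t - length a)" using 3 by simp
    ultimately show ?thesis using 3 by (simp add: nth_append)
  qed
qed

lemma walk_take:
  assumes "is_walk E p" "0 < m"
  shows "is_walk E (take m p)"
  using assms unfolding is_walk_def by auto

lemma walk_drop:
  assumes "is_walk E p" "m < length p"
  shows "is_walk E (drop m p)"
  using assms unfolding is_walk_def by auto

lemma cyc:
  assumes q: "is_path E q i j" and p: "is_path E p j k"
    and ip: "i \<notin> set p" and kq: "k \<notin> set q" and ik: "{i,k} \<in> E"
  shows "has_cycle E"
proof -
  have qw: "is_walk E q" "distinct q" "hd q = i" "last q = j" "q \<noteq> []"
    using q by (auto simp: is_path_def is_walk_def)
  have pw: "is_walk E p" "distinct p" "hd p = j" "last p = k" "p \<noteq> []"
    using p by (auto simp: is_path_def is_walk_def)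
  define T where "T = {t. t < length p \<and> p ! t \<in> set q}"
  have fT: "finite T" unfolding T_def by simp
  have "j \<in> set q" using qw last_in_set by metis
  then have "0 \<in> T" unfolding T_def using pw by (simp add: hd_conv_nth[symmetric])
  define t where "t = Max T"
  have tT: "t \<in> T" unfolding t_def using fT \<open>0 \<in> T\<close> Max_in by blast
  have tmax: "\<And>u. u \<in> T \<Longrightarrow> u \<le> t" unfolding t_def using fT by simp
  have tl: "t < length p" "p ! t \<in> set q" using tT unfolding T_def by auto
  have tne: "t \<noteq> length p - 1"
  proof
    assume "t = length p - 1"
    then have "p ! t = k" using pw by (simp add: last_conv_nth)
    then show False using tl kq by simp
  qed
  then have tl2: "Suc t < length p" using tl by simp
  obtain idx where idx: "idx < length q" "q ! idx = p ! t" using tl by (meson in_set_conv_nth)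
  have idx0: "idx \<noteq> 0"
  proof
    assume "idx = 0"
    then have "p ! t = i" using idx qw by (simp add: hd_conv_nth)
    then show False using ip tl by (metis nth_mem)
  qed
  define L where "L = take (Suc idx) q @ drop (Suc t) p"
  have disj: "set (take (Suc idx) q) \<inter> set (drop (Suc t) p) = {}"
  proof (rule ccontr)
    assume "\<not> ?thesis"
    then obtain x where x1: "x \<in> set q" and x2: "x \<in> set (drop (Suc t) p)"
      by (meson disjoint_iff in_set_takeD)
    then obtain u where "u < length (drop (Suc t) p)" "drop (Suc t) p ! u = x"
      by (meson in_set_conv_nth)
    then have "Suc t + u \<in> T" using x1 unfolding T_def by auto
    then show False using tmax by fastforce
  qed
  have dL: "distinct L" unfolding L_def using disj qw pw by simp
  have lt: "last (take (Suc idx) q) = p ! t"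
    using idx by (simp add: take_Suc_conv_app_nth)
  have hd: "hd (drop (Suc t) p) = p ! Suc t" using tl2 by (simp add: hd_drop_conv_nth)
  have edge: "{p ! t, p ! Suc t} \<in> E" using pw(1) tl2 unfolding is_walk_def by auto
  have wL: "is_walk E L" unfolding L_def
    using walk_append[OF walk_take[OF qw(1)] walk_drop[OF pw(1) tl2]] lt hd edge by simp
  have "length L \<ge> 3" unfolding L_def using idx idx0 tl2 by simp
  moreover have "hd L = i" unfolding L_def using qw by (cases q) auto
  moreover have "last L = k" unfolding L_def using pw tl2 by simp
  ultimately show ?thesis unfolding has_cycle_def using wL dL ik
    by (metis insert_commute)
qed

lemma key:
  assumes nc: "noncrossing E" and ik: "{i,k} \<in> E" and ilt: "i < k" and i1: "i \<ge> 1"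
  shows "i < j \<Longrightarrow> j < k \<Longrightarrow> signature E i \<le> signature E j \<and>
     (signature E i + 1 \<le> signature E j \<or> (\<exists>q. is_path E q i j \<and> set q \<subseteq> {i..j}))"
proof (induction j rule: less_induct)
  case (less j)
  have j1: "\<not> j \<le> 1" using less.prems i1 by simp
  show ?case
  proof (cases "\<exists>m<j. {m, j} \<in> E")
    case True
    define m where "m = (LEAST m. {m, j} \<in> E)"
    have mE: "{m, j} \<in> E" unfolding m_def using True by (meson LeastI)
    have mj: "m < j" using True unfolding m_def by (meson Least_le le_less_trans)
    have sj: "signature E j = signature E m"
      using j1 True by (subst signature.simps) (simp add: m_def)
    have mi: "m \<ge> i"
    proof (rule ccontr)
      assume "\<not> m \<ge> i"
      then have "m < i" by simp
      then show False using nc mE ik less.prems unfolding noncrossing_def by blast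
    qed
    show ?thesis
    proof (cases "m = i")
      case True
      have "is_path E [i, j] i j" using mE True less.prems
        unfolding is_path_def is_walk_def by simp
      then show ?thesis using sj True less.prems by fastforce
    next
      case False
      then have "i < m" using mi by simp
      from less.IH[OF mj this] mj less.prems obtain q where
        h: "signature E i \<le> signature E m"
        "signature E i + 1 \<le> signature E m \<or> (is_path E q i m \<and> set q \<subseteq> {i..m})"
        by fastforce
      show ?thesis
      proof (cases "signature E i + 1 \<le> signature E m")
        case True then show ?thesis using sj h by simp
      next
        case False
        then have qp: "is_path E q i m" "set q \<subseteq> {i..m}" using h by auto
        have "is_path E (q @ [j]) i j"
          unfolding is_path_def
        proof (intro conjI)
          have "is_walk E [j]" by (simp add: is_walk_def)
          moreover have "{last q, hd [j]} \<in> E" using qp mE by (simp add: is_path_def)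
          ultimately show "is_walk E (q @ [j])" using walk_append qp by (auto simp: is_path_def)
          show "distinct (q @ [j])" using qp mj by (auto simp: is_path_def)
          show "hd (q @ [j]) = i" using qp by (auto simp: is_path_def is_walk_def)
        qed simp
        moreover have "set (q @ [j]) \<subseteq> {i..j}" using qp mj less.prems by auto
        ultimately show ?thesis using sj h by (metis)
      qed
    qed
  next
    case False
    have sj: "signature E j = signature E (j - 1) + 1"
      by (subst signature.simps) (simp only: if_not_P[OF j1] if_not_P[OF False])
    show ?thesis
    proof (cases "j - 1 = i")
      case True then show ?thesis using sj by simp
    next
      case False
      then have "i < j - 1" "j - 1 < j" using less.prems by auto
      from less.IH[OF this(2) this(1)] less.prems have "signature E i \<le> signature E (j - 1)" by simp
      then show ?thesis using sj by simp
    qed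
  qed
qed

theorem lemma3p13:
  fixes n i k :: nat and E :: "nat set set"
  assumes "is_tree n E" and "noncrossing E"
    and "{i, k} \<in> E" and "i < k"
  shows "(\<forall>j. i < j \<and> j < k \<longrightarrow> signature E j \<ge> signature E i)
       \<and> (\<forall>j p. i < j \<and> j < k \<and> is_path E p j k \<and> i \<notin> set p
              \<longrightarrow> signature E j \<ge> signature E i + 1)"
proof -
  have g: "graph_on n E" and nocyc: "\<not> has_cycle E" using assms(1) by (auto simp: is_tree_def)
  obtain a b where "{i,k} = {a,b}" "a \<in> {1..n}" "b \<in> {1..n}"
    using g assms(3) unfolding graph_on_def by blast
  then have i1: "i \<ge> 1" by (auto simp: doubleton_eq_iff)
  note K = key[OF assms(2) assms(3) assms(4) i1]
  show ?thesis
  proof (intro conjI allI impI)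
    fix j assume "i < j \<and> j < k"
    then show "signature E i \<le> signature E j" using K by blast
  next
    fix j p assume h: "i < j \<and> j < k \<and> is_path E p j k \<and> i \<notin> set p"
    show "signature E i + 1 \<le> signature E j"
    proof (rule ccontr)
      assume "\<not> ?thesis"
      then obtain q where "is_path E q i j" "set q \<subseteq> {i..j}" using K h by blast
      moreover have "k \<notin> set q" using calculation h by auto
      ultimately have "has_cycle E" using cyc h assms(3) by blast
      then show False using nocyc by simp
    qed
  qed
qed

end
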